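(* Let $\lambda>0$, $\mathbf{A}\in\mathbb{R}^{m\times n}$ with columns $\mathbf{a}_1,\dots,\mathbf{a}_n$, let $f:\mathbb{R}^m\to\mathbb{R}\cup\{+\infty\}$, and let $h:\mathbb{R}\to\mathbb{R}\cup\{+\infty\}$ be proper, closed and convex with $0\in\mathrm{dom}(h)$, $h(0)=0$, and $0$ an accumulation point of $\mathrm{dom}(h)$. Let $\nu=(\mathcal{S}_0,\mathcal{S}_1,\mathcal{S}_\bullet)$ and $\nu'=(\mathcal{S}_0',\mathcal{S}_1',\mathcal{S}_\bullet')$ be partitions of $\{1,\dots,n\}$ such that $\mathcal{S}_0\subseteq\mathcal{S}_0'$, $\mathcal{S}_1\subseteq\mathcal{S}_1'$ and $(\mathcal{S}_0'\setminus\mathcal{S}_0)\cup(\mathcal{S}_1'\setminus\mathcal{S}_1)=\{i\}$ for some $i\in\mathcal{S}_\bullet$. Then for all $\mathbf{u}\in\mathbb{R}^m$, $$D^{\nu'}(\mathbf{u})=D^\nu(\mathbf{u})+\begin{cases}\phi_0(\mathbf{a}_i^\top\mathbf{u}) & \text{if } i\in\mathcal{S}_0',\\ \phi_1(\mathbf{a}_i^\top\mathbf{u}) & \text{if } i\in\mathcal{S}_1'.\end{cases}$$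
   Context: $\|\mathbf{x}\|_0$ is the number of nonzero entries of $\mathbf{x}$; $\eta(\text{condition})=0$ if the condition holds and $+\infty$ otherwise; $\omega^*$ denotes the convex conjugate of $\omega$. An accumulation point $0$ of a set $\mathcal{C}\subseteq\mathbb{R}$: every neighborhood of $0$ contains a point of $\mathcal{C}$ other than $0$. For a partition $\nu=(\mathcal{S}_0,\mathcal{S}_1,\mathcal{S}_\bullet)$: $\mathcal{X}^\nu=\{\mathbf{x}\in\mathbb{R}^n: x_j=0\ \forall j\in\mathcal{S}_0,\ x_j\neq0\ \forall j\in\mathcal{S}_1\}$; $g^\nu(\mathbf{x})=\lambda\|\mathbf{x}\|_0+\sum_{j=1}^n h(x_j)+\eta(\mathbf{x}\in\mathcal{X}^\nu)$; $D^\nu(\mathbf{u})=-f^*(-\mathbf{u})-(g^\nu)^*(\mathbf{A}^\top\mathbf{u})$. Also $\phi_0(v)=\max(h^*(v)-\lambda,0)$ and $\phi_1(v)=\max(\lambda-h^*(v),0)$. *)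

theory Defs
  imports "HOL-Analysis.Analysis"
begin

text \<open>Extended-real valued functions R^k -> R \<union> {+inf}: values in ereal, never -inf.\<close>

definition epigraph_e :: "('a \<Rightarrow> ereal) \<Rightarrow> ('a \<times> real) set" where
  "epigraph_e w = {(x, t). w x \<le> ereal t}"

definition edom :: "('a \<Rightarrow> ereal) \<Rightarrow> 'a set" where
  "edom w = {x. w x < \<infinity>}"

definition proper_fun :: "('a \<Rightarrow> ereal) \<Rightarrow> bool" where
  "proper_fun w \<longleftrightarrow> (\<forall>x. w x \<noteq> -\<infinity>) \<and> (\<exists>x. w x < \<infinity>)"

definition closed_fun :: "('a::topological_space \<Rightarrow> ereal) \<Rightarrow> bool" where
  "closed_fun w \<longleftrightarrow> closed (epigraph_e w)"

definition convex_fun :: "('a::real_vector \<Rightarrow> ereal) \<Rightarrow> bool" where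
  "convex_fun w \<longleftrightarrow> convex (epigraph_e w)"

definition conj_fun :: "('a::real_inner \<Rightarrow> ereal) \<Rightarrow> 'a \<Rightarrow> ereal" where
  "conj_fun w y = (SUP x. ereal (inner x y) - w x)"

definition l0norm :: "real^'n \<Rightarrow> nat" where
  "l0norm x = card {j. x $ j \<noteq> 0}"

definition eta :: "bool \<Rightarrow> ereal" where
  "eta b = (if b then 0 else \<infinity>)"

definition Xnu :: "'n set \<Rightarrow> 'n set \<Rightarrow> (real^'n) set" where
  "Xnu S0 S1 = {x. (\<forall>j\<in>S0. x $ j = 0) \<and> (\<forall>j\<in>S1. x $ j \<noteq> 0)}"

definition gnu :: "real \<Rightarrow> (real \<Rightarrow> ereal) \<Rightarrow> 'n::finite set \<Rightarrow> 'n set \<Rightarrow> real^'n \<Rightarrow> ereal" where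
  "gnu lam h S0 S1 x = ereal (lam * real (l0norm x)) + (\<Sum>j\<in>UNIV. h (x $ j)) + eta (x \<in> Xnu S0 S1)"

definition Dnu :: "(real^'m \<Rightarrow> ereal) \<Rightarrow> real^'n^'m \<Rightarrow> real \<Rightarrow> (real \<Rightarrow> ereal)
     \<Rightarrow> 'n::finite set \<Rightarrow> 'n set \<Rightarrow> real^'m \<Rightarrow> ereal" where
  "Dnu f A lam h S0 S1 u = - conj_fun f (- u) - conj_fun (gnu lam h S0 S1) (transpose A *v u)"

definition phi0 :: "real \<Rightarrow> (real \<Rightarrow> ereal) \<Rightarrow> real \<Rightarrow> ereal" where
  "phi0 lam h v = max (conj_fun h v - ereal lam) 0"

definition phi1 :: "real \<Rightarrow> (real \<Rightarrow> ereal) \<Rightarrow> real \<Rightarrow> ereal" where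
  "phi1 lam h v = max (ereal lam - conj_fun h v) 0"

end

theory Submission imports Defs begin

lemma SUP_prod_add:
  fixes a :: "'a \<Rightarrow> ereal" and k :: "'b \<Rightarrow> ereal"
  assumes T: "T \<noteq> {}" and sa: "(SUP y\<in>Y. a y) \<noteq> -\<infinity>" and sk: "(SUP t\<in>T. k t) \<noteq> -\<infinity>"
  shows "(SUP p\<in>Y\<times>T. a (fst p) + k (snd p)) = (SUP y\<in>Y. a y) + (SUP t\<in>T. k t)"
proof (rule antisym)
  show "(SUP p\<in>Y\<times>T. a (fst p) + k (snd p)) \<le> (SUP y\<in>Y. a y) + (SUP t\<in>T. k t)"
    by (rule SUP_least) (auto intro!: add_mono SUP_upper)
  let ?Y = "{y\<in>Y. a y \<noteq> -\<infinity>}"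
  have eqY: "(SUP y\<in>Y. a y) = (SUP y\<in>?Y. a y)"
  proof (rule antisym)
    show "(SUP y\<in>Y. a y) \<le> (SUP y\<in>?Y. a y)"
    proof (rule SUP_least)
      fix y assume "y \<in> Y"
      then show "a y \<le> (SUP y\<in>?Y. a y)"
        by (cases "a y = -\<infinity>") (auto intro: SUP_upper)
    qed
    show "(SUP y\<in>?Y. a y) \<le> (SUP y\<in>Y. a y)" by (rule SUP_subset_mono) auto
  qed
  have ne: "?Y \<noteq> {}"
  proof
    assume "?Y = {}"
    then have "(SUP y\<in>Y. a y) = -\<infinity>" by (auto simp: Sup_eq_MInfty)
    with sa show False by simp
  qed
  have "(SUP y\<in>Y. a y) + (SUP t\<in>T. k t) = (SUP y\<in>?Y. a y + (SUP t\<in>T. k t))"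
    using SUP_ereal_add_left[OF ne sk, of a] eqY by simp
  also have "\<dots> \<le> (SUP p\<in>Y\<times>T. a (fst p) + k (snd p))"
  proof (rule SUP_least)
    fix y assume y: "y \<in> ?Y"
    have "a y + (SUP t\<in>T. k t) = (SUP t\<in>T. a y + k t)"
      using SUP_ereal_add_right[OF T, of "a y" k] y by simp
    also have "\<dots> \<le> (SUP p\<in>Y\<times>T. a (fst p) + k (snd p))"
    proof (rule SUP_least)
      fix t assume "t \<in> T"
      then show "a y + k t \<le> (SUP p\<in>Y\<times>T. a (fst p) + k (snd p))"
        using y by (intro SUP_upper2[of "(y,t)"]) auto
    qed
    finally show "a y + (SUP t\<in>T. k t) \<le> (SUP p\<in>Y\<times>T. a (fst p) + k (snd p))" .
  qed
  finally show "(SUP y\<in>Y. a y) + (SUP t\<in>T. k t) \<le> (SUP p\<in>Y\<times>T. a (fst p) + k (snd p))" .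
qed

lemma final_A:
  fixes G C0 H :: ereal
  assumes "C0 \<noteq> -\<infinity>"
    and "\<not> (G - sup C0 (C0 + (H - ereal lam)) = -\<infinity> \<and> max (H - ereal lam) 0 = \<infinity>)"
  shows "G - C0 = G - sup C0 (C0 + (H - ereal lam)) + max (H - ereal lam) 0"
  using assms by (cases G; cases C0; cases H) (auto simp: max_def sup_ereal_def)

lemma final_B:
  fixes G C0 H :: ereal
  assumes "C0 \<noteq> -\<infinity>" "H \<noteq> -\<infinity>"
  shows "G - (C0 + (H - ereal lam)) = G - sup C0 (C0 + (H - ereal lam)) + max (ereal lam - H) 0"
  using assms by (cases G; cases C0; cases H) (auto simp: max_def sup_ereal_def)

definition upd :: "real^'n \<Rightarrow> 'n \<Rightarrow> real \<Rightarrow> real^'n" where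
  "upd y i t = (\<chi> j. if j = i then t else y $ j)"

lemma h_ne: "proper_fun h \<Longrightarrow> h x \<noteq> -\<infinity>" by (simp add: proper_fun_def)

lemma exists_t0:
  assumes "proper_fun h" "0 islimpt edom h"
  obtains t0 c where "t0 \<noteq> 0" "h t0 = ereal c"
proof -
  obtain t0 where "t0 \<in> edom h" "t0 \<noteq> 0"
    using assms(2) unfolding islimpt_def by (metis UNIV_I open_UNIV)
  then show ?thesis using that h_ne[OF assms(1), of t0]
    by (cases "h t0") (auto simp: edom_def)
qed

lemma approx0:
  assumes conv: "convex_fun h" and h0: "h 0 = 0" and pr: "proper_fun h" and acc: "0 islimpt edom h"
  shows "0 \<le> (SUP t\<in>(-{0}). ereal (t * v) - h t)"
proof -
  obtain t0 c where t0: "t0 \<noteq> 0" "h t0 = ereal c" using exists_t0[OF pr acc] by blast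
  have hs: "h (s*t0) \<le> ereal (s*c)" if "0 < s" "s \<le> 1" for s
  proof -
    have "(0::real, 0::real) \<in> epigraph_e h" using h0 by (simp add: epigraph_e_def)
    moreover have "(t0, c) \<in> epigraph_e h" using t0 by (simp add: epigraph_e_def)
    ultimately have "(1-s) *\<^sub>R (0::real, 0::real) + s *\<^sub>R (t0, c) \<in> epigraph_e h"
      using conv that unfolding convex_fun_def by (intro convexD) auto
    then show ?thesis by (simp add: epigraph_e_def)
  qed
  show ?thesis
  proof (rule ereal_le_epsilon2)
    fix e :: real assume e: "0 < e"
    define d where "d = t0 * v - c"
    define s where "s = min 1 (e/(\<bar>d\<bar>+1))"
    have s: "0 < s" "s \<le> 1" using e by (auto simp: s_def)
    have "s * \<bar>d\<bar> \<le> e/(\<bar>d\<bar>+1) * \<bar>d\<bar>" by (intro mult_right_mono) (auto simp: s_def)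
    also have "\<dots> \<le> e" using e by (simp add: divide_le_eq mult_left_mono)
    finally have sd: "- e \<le> s*d" by (smt (verit) abs_ge_minus_self mult_minus_right mult_left_mono s(1))
    have "ereal (s*d) \<le> ereal ((s*t0) * v) - h (s*t0)"
      using hs[OF s] h_ne[OF pr, of "s*t0"] by (cases "h (s*t0)") (auto simp: d_def algebra_simps)
    also have "\<dots> \<le> (SUP t\<in>(-{0}). ereal (t * v) - h t)"
      using s t0 by (intro SUP_upper) auto
    finally have "ereal (-e) \<le> (SUP t\<in>(-{0}). ereal (t * v) - h t)" using sd
      by (meson ereal_less_eq(3) order_trans)
    then show "0 \<le> (SUP t\<in>(-{0}). ereal (t * v) - h t) + ereal e"
      by (cases "(SUP t\<in>(-{0}). ereal (t * v) - h t)") auto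
  qed
qed

lemma conj_nonzero:
  assumes conv: "convex_fun h" and h0: "h 0 = 0" and pr: "proper_fun h" and acc: "0 islimpt edom h"
  shows "(SUP t\<in>(-{0}). ereal (t * v) - h t) = conj_fun h v"
proof (rule antisym)
  show "(SUP t\<in>(-{0}). ereal (t * v) - h t) \<le> conj_fun h v"
    unfolding conj_fun_def by (rule SUP_subset_mono) auto
  show "conj_fun h v \<le> (SUP t\<in>(-{0}). ereal (t * v) - h t)"
    unfolding conj_fun_def
  proof (rule SUP_least)
    fix t :: real
    show "ereal (t \<bullet> v) - h t \<le> (SUP t\<in>(-{0}). ereal (t * v) - h t)"
    proof (cases "t = 0")
      case True then show ?thesis using approx0[OF assms, of v] h0 by (simp add: zero_ereal_def)
    next
      case False then show ?thesis by (intro SUP_upper2[of t]) auto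
    qed
  qed
qed

lemma conj_H_ge0: assumes "h 0 = 0" shows "0 \<le> conj_fun h v"
  unfolding conj_fun_def using assms by (intro SUP_upper2[of 0]) auto

definition Psi :: "real \<Rightarrow> (real \<Rightarrow> ereal) \<Rightarrow> real^'n \<Rightarrow> real^'n::finite \<Rightarrow> ereal" where
  "Psi lam h w x = ereal (x \<bullet> w) - (ereal (lam * real (l0norm x)) + (\<Sum>j\<in>UNIV. h (x $ j)))"

lemma sum_ne_minf_gen: "finite A \<Longrightarrow> (\<forall>x\<in>A. f x \<noteq> -\<infinity>) \<Longrightarrow> sum f A \<noteq> (-\<infinity>::ereal)"
  by (induct rule: finite_induct) auto

lemma sum_ne_minf: "proper_fun h \<Longrightarrow> (\<Sum>j\<in>(UNIV::'n::finite set). h (x $ j)) \<noteq> -\<infinity>"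
  by (intro sum_ne_minf_gen) (auto simp: proper_fun_def)

lemma conj_g:
  assumes pr: "proper_fun h"
  shows "conj_fun (gnu lam h S0 S1) w = (SUP x\<in>Xnu S0 S1. Psi lam h w x)"
proof -
  have eq: "ereal (x \<bullet> w) - gnu lam h S0 S1 x = (if x \<in> Xnu S0 S1 then Psi lam h w x else -\<infinity>)" for x
    using sum_ne_minf[OF pr, of x]
    by (cases "(\<Sum>j\<in>UNIV. h (x $ j))") (auto simp: gnu_def Psi_def eta_def)
  show ?thesis
    unfolding conj_fun_def eq
  proof (rule antisym)
    show "(SUP x. if x \<in> Xnu S0 S1 then Psi lam h w x else - \<infinity>) \<le> (SUP x\<in>Xnu S0 S1. Psi lam h w x)"
      by (rule SUP_least) (auto intro: SUP_upper)
    show "(SUP x\<in>Xnu S0 S1. Psi lam h w x) \<le> (SUP x. if x \<in> Xnu S0 S1 then Psi lam h w x else - \<infinity>)"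
      by (rule SUP_least) (rule SUP_upper2, auto)
  qed
qed

lemma upd_inner: "y $ i = 0 \<Longrightarrow> upd y i t \<bullet> w = y \<bullet> w + t * w $ i"
proof -
  assume y: "y $ i = 0"
  have "upd y i t \<bullet> w = (\<Sum>j\<in>UNIV. (upd y i t) $ j * w $ j)" by (simp add: inner_vec_def)
  also have "\<dots> = t * w $ i + (\<Sum>j\<in>UNIV - {i}. y $ j * w $ j)"
    by (subst sum.remove[of _ i]) (auto simp: upd_def intro!: sum.cong)
  also have "y \<bullet> w = (\<Sum>j\<in>UNIV - {i}. y $ j * w $ j)"
    using y by (simp add: inner_vec_def sum.remove[of _ i])
  ultimately show ?thesis by simp
qed

lemma upd_l0: "y $ i = 0 \<Longrightarrow> t \<noteq> 0 \<Longrightarrow> l0norm (upd y i t) = l0norm y + 1"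
proof -
  assume y: "y $ i = 0" and t: "t \<noteq> 0"
  have "{j. upd y i t $ j \<noteq> 0} = insert i {j. y $ j \<noteq> 0}" using t by (auto simp: upd_def)
  then show ?thesis using y by (simp add: l0norm_def)
qed

lemma upd_sum:
  assumes "y $ i = 0" "h 0 = 0"
  shows "(\<Sum>j\<in>UNIV. h (upd y i t $ j)) = (\<Sum>j\<in>UNIV. h (y $ j)) + h t"
proof -
  have "(\<Sum>j\<in>UNIV. h (upd y i t $ j)) = h t + (\<Sum>j\<in>UNIV - {i}. h (y $ j))"
    by (subst sum.remove[of _ i]) (auto simp: upd_def intro!: sum.cong)
  moreover have "(\<Sum>j\<in>UNIV. h (y $ j)) = (\<Sum>j\<in>UNIV - {i}. h (y $ j))"
    using assms by (simp add: sum.remove[of _ i])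
  ultimately show ?thesis by (simp add: add.commute)
qed

lemma Psi_upd:
  assumes y: "y $ i = 0" and t: "t \<noteq> 0" and h0: "h 0 = 0" and pr: "proper_fun h"
  shows "Psi lam h w (upd y i t) = Psi lam h w y + (ereal (t * w $ i - lam) - h t)"
proof -
  define S where "S = (\<Sum>j\<in>UNIV. h (y $ j))"
  have S: "S \<noteq> -\<infinity>" using sum_ne_minf[OF pr] by (simp add: S_def)
  have ht: "h t \<noteq> -\<infinity>" using h_ne[OF pr] .
  show ?thesis
    unfolding Psi_def upd_inner[OF y] upd_l0[OF y t] upd_sum[of y i h t, OF y h0] S_def[symmetric]
    using S ht by (cases S; cases "h t") (auto simp: algebra_simps)
qed

lemma X1_image:
  assumes "i \<notin> S0" "i \<notin> S1"
  shows "Xnu S0 (insert i S1) = (\<lambda>p. upd (fst p) i (snd p)) ` (Xnu (insert i S0) S1 \<times> (-{0}))"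
proof
  show "Xnu S0 (insert i S1) \<subseteq> (\<lambda>p. upd (fst p) i (snd p)) ` (Xnu (insert i S0) S1 \<times> (-{0}))"
  proof
    fix x assume x: "x \<in> Xnu S0 (insert i S1)"
    have "x = upd (upd x i 0) i (x $ i)" by (simp add: upd_def vec_eq_iff)
    moreover have "(upd x i 0, x $ i) \<in> Xnu (insert i S0) S1 \<times> (-{0})"
      using x assms by (auto simp: Xnu_def upd_def)
    ultimately show "x \<in> (\<lambda>p. upd (fst p) i (snd p)) ` (Xnu (insert i S0) S1 \<times> (-{0}))"
      by (metis (no_types, lifting) fst_conv image_eqI snd_conv)
  qed
  show "(\<lambda>p. upd (fst p) i (snd p)) ` (Xnu (insert i S0) S1 \<times> (-{0})) \<subseteq> Xnu S0 (insert i S1)"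
    using assms by (auto simp: Xnu_def upd_def split: if_splits)
qed

lemma SUP_k:
  assumes pr: "proper_fun h" and conv: "convex_fun h" and h0: "h 0 = 0" and acc: "0 islimpt edom h"
  shows "(SUP t\<in>-{0}. ereal (t * v - lam) - h t) = conj_fun h v - ereal lam"
proof -
  have "(SUP t\<in>-{0}. ereal (t * v - lam) - h t) = (SUP t\<in>-{0}. (ereal (t * v) - h t) - ereal lam)"
    using h_ne[OF pr] by (intro SUP_cong refl) (case_tac "h x"; simp)
  also have "\<dots> = (SUP t\<in>-{0}. ereal (t * v) - h t) - ereal lam"
    by (rule SUP_ereal_minus_left) auto
  also have "\<dots> = conj_fun h v - ereal lam" using conj_nonzero[OF conv h0 pr acc] by simp
  finally show ?thesis .
qed

lemma SUP_X1:
  assumes i: "i \<notin> S0" "i \<notin> S1" and conv: "convex_fun h" and h0: "h 0 = 0" and pr: "proper_fun h"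
    and acc: "0 islimpt edom h"
    and ne: "(SUP x\<in>Xnu (insert i S0) S1. Psi lam h w x) \<noteq> -\<infinity>"
  shows "(SUP x\<in>Xnu S0 (insert i S1). Psi lam h w x)
       = (SUP x\<in>Xnu (insert i S0) S1. Psi lam h w x) + (conj_fun h (w $ i) - ereal lam)"
proof -
  have "(SUP x\<in>Xnu S0 (insert i S1). Psi lam h w x)
      = (SUP p\<in>Xnu (insert i S0) S1 \<times> (-{0}). Psi lam h w (upd (fst p) i (snd p)))"
    by (simp add: X1_image[OF i] image_comp)
  also have "\<dots> = (SUP p\<in>Xnu (insert i S0) S1 \<times> (-{0}).
        Psi lam h w (fst p) + (ereal (snd p * w $ i - lam) - h (snd p)))"
    by (rule SUP_cong[OF refl]) (use h0 pr in \<open>auto simp: Xnu_def intro!: Psi_upd\<close>)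
  also have "\<dots> = (SUP x\<in>Xnu (insert i S0) S1. Psi lam h w x) + (SUP t\<in>-{0}. ereal (t * w $ i - lam) - h t)"
  proof (rule SUP_prod_add[OF _ ne])
    show "- {0::real} \<noteq> {}" by auto
    have "0 \<le> conj_fun h (w $ i)" using conj_H_ge0[of h, OF h0] by blast
    then show "(SUP t\<in>-{0}. ereal (t * w $ i - lam) - h t) \<noteq> - \<infinity>"
      unfolding SUP_k[OF pr conv h0 acc] by (cases "conj_fun h (w $ i)") auto
  qed
  also have "\<dots> = (SUP x\<in>Xnu (insert i S0) S1. Psi lam h w x) + (conj_fun h (w $ i) - ereal lam)"
    unfolding SUP_k[OF pr conv h0 acc] ..
  finally show ?thesis .
qed

lemma C0_ne:
  assumes pr: "proper_fun h" and acc: "0 islimpt edom h" and h0: "h 0 = 0"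
    and dis: "S0 \<inter> S1 = {}" and i: "i \<notin> S1"
  shows "(SUP x\<in>Xnu (insert i S0) S1. Psi lam h w x) \<noteq> -\<infinity>"
proof -
  obtain t0 c where t0: "t0 \<noteq> 0" "h t0 = ereal c" using exists_t0[OF pr acc] by blast
  define y :: "real^'a" where "y = (\<chi> j. if j \<in> S1 then t0 else 0)"
  have y: "y \<in> Xnu (insert i S0) S1" using dis i t0 by (auto simp: Xnu_def y_def)
  have fin: "(\<Sum>j\<in>UNIV. h (y $ j)) \<noteq> \<infinity>"
    using t0 h0 by (simp add: sum_Pinfty y_def)
  have "Psi lam h w y \<noteq> -\<infinity>"
    using fin sum_ne_minf[OF pr, of y] unfolding Psi_def
    by (cases "(\<Sum>j\<in>UNIV. h (y $ j))") auto
  moreover have "Psi lam h w y \<le> (SUP x\<in>Xnu (insert i S0) S1. Psi lam h w x)"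
    using y by (rule SUP_upper)
  ultimately show ?thesis by auto
qed

lemma sets_A: "(S0' - S0) \<union> (S1' - S1) = {i} \<Longrightarrow> S0 \<subseteq> S0' \<Longrightarrow> S1 \<subseteq> S1' \<Longrightarrow> S0' \<inter> S1' = {}
  \<Longrightarrow> i \<in> S0' \<Longrightarrow> S0' = insert i S0 \<and> S1' = S1"
  unfolding set_eq_iff by auto

lemma sets_B: "(S0' - S0) \<union> (S1' - S1) = {i} \<Longrightarrow> S0 \<subseteq> S0' \<Longrightarrow> S1 \<subseteq> S1'
  \<Longrightarrow> i \<notin> S0' \<Longrightarrow> S0' = S0 \<and> S1' = insert i S1"
  unfolding set_eq_iff by auto

theorem lemmaA3:
  fixes lam :: real and A :: "real^'n^'m" and f :: "real^'m \<Rightarrow> ereal"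
    and h :: "real \<Rightarrow> ereal"
    and S0 S1 Sb S0' S1' Sb' :: "'n set" and i :: 'n and u :: "real^'m"
  assumes lam: "lam > 0"
    and f_val: "\<forall>y. f y \<noteq> -\<infinity>"
    and h_proper: "proper_fun h" and h_closed: "closed_fun h" and h_convex: "convex_fun h"
    and h_dom0: "0 \<in> edom h" and h0: "h 0 = 0" and h_acc: "0 islimpt edom h"
    and part: "S0 \<inter> S1 = {}" "S0 \<inter> Sb = {}" "S1 \<inter> Sb = {}" "S0 \<union> S1 \<union> Sb = UNIV"
    and part': "S0' \<inter> S1' = {}" "S0' \<inter> Sb' = {}" "S1' \<inter> Sb' = {}" "S0' \<union> S1' \<union> Sb' = UNIV"
    and sub: "S0 \<subseteq> S0'" "S1 \<subseteq> S1'"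
    and i: "i \<in> Sb" "(S0' - S0) \<union> (S1' - S1) = {i}"
    and well_defined: "\<not> (Dnu f A lam h S0 S1 u = -\<infinity> \<and>
        (if i \<in> S0' then phi0 lam h (column i A \<bullet> u) else phi1 lam h (column i A \<bullet> u)) = \<infinity>)"
  shows "Dnu f A lam h S0' S1' u = Dnu f A lam h S0 S1 u +
        (if i \<in> S0' then phi0 lam h (column i A \<bullet> u) else phi1 lam h (column i A \<bullet> u))"
proof -
  define w where "w = transpose A *v u"
  define G where "G = - conj_fun f (-u)"
  have col: "column i A \<bullet> u = w $ i"
    by (simp add: w_def column_def matrix_vector_mult_def transpose_def inner_vec_def mult.commute)
  have iS: "i \<notin> S0" "i \<notin> S1" using i part by auto
  define C0 where "C0 = (SUP x\<in>Xnu (insert i S0) S1. Psi lam h w x)"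
  define H where "H = conj_fun h (w $ i)"
  have C0ne: "C0 \<noteq> -\<infinity>" unfolding C0_def using C0_ne[OF h_proper h_acc h0 part(1) iS(2)] .
  have C1: "(SUP x\<in>Xnu S0 (insert i S1). Psi lam h w x) = C0 + (H - ereal lam)"
    unfolding C0_def H_def using SUP_X1[OF iS h_convex h0 h_proper h_acc C0_ne[OF h_proper h_acc h0 part(1) iS(2)]] .
  have XU: "Xnu S0 S1 = Xnu (insert i S0) S1 \<union> Xnu S0 (insert i S1)" by (auto simp: Xnu_def)
  have C: "conj_fun (gnu lam h S0 S1) w = sup C0 (C0 + (H - ereal lam))"
    unfolding conj_g[OF h_proper] XU SUP_union C1 C0_def ..
  have Hne: "H \<noteq> -\<infinity>" using conj_H_ge0[of h, OF h0, of "w $ i"] unfolding H_def by auto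
  have D: "Dnu f A lam h S0 S1 u = G - sup C0 (C0 + (H - ereal lam))"
    unfolding Dnu_def G_def w_def[symmetric] C ..
  show ?thesis
  proof (cases "i \<in> S0'")
    case True
    have S: "S0' = insert i S0" "S1' = S1" using sets_A[OF i(2) sub part'(1) True] by auto
    have D': "Dnu f A lam h S0' S1' u = G - C0"
      unfolding Dnu_def G_def w_def[symmetric] S conj_g[OF h_proper] C0_def ..
    show ?thesis
      unfolding D D' col using True well_defined final_A[OF C0ne]
      unfolding D col phi0_def H_def by simp
  next
    case False
    have S: "S0' = S0" "S1' = insert i S1" using sets_B[OF i(2) sub False] by auto
    have D': "Dnu f A lam h S0' S1' u = G - (C0 + (H - ereal lam))"
      unfolding Dnu_def G_def w_def[symmetric] S conj_g[OF h_proper] C1 ..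
    show ?thesis
      unfolding D D' col phi1_def H_def using False final_B[OF C0ne Hne] unfolding H_def by simp
  qed
qed

end
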